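(* Let $\Sigma$ be an alphabet of $n$ characters with $n\ge 9$, and let $\sigma$ be a random string of length $q'\le\sqrt n$ whose characters are chosen independently and uniformly at random from $\Sigma$. Then for any $\gamma\ge 4$, the probability that $\sigma$ contains $\gamma+1$ or more reappearing characters is at most $e^{-\gamma}$.
   Context: A character occurrence in a string is reappearing if the same character already occurs somewhere to its left; e.g. in $1211$ the second and third $1$'s are reappearing. *)

theory Defs
  imports "HOL-Probability.Probability"
begin

definition reappearing_positions :: "'a list \<Rightarrow> nat set" where
  "reappearing_positions xs = {i. i < length xs \<and> xs ! i \<in> set (take i xs)}"

definition num_reappearing :: "'a list \<Rightarrow> nat" where
  "num_reappearing xs = card (reappearing_positions xs)"

definition strings_of_length :: "'a set \<Rightarrow> nat \<Rightarrow> 'a list set" where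
  "strings_of_length S q = {xs. set xs \<subseteq> S \<and> length xs = q}"

end

theory Submission
  imports Defs
begin

definition goodset :: "'a set \<Rightarrow> nat set \<Rightarrow> nat \<Rightarrow> 'a list set" where
  "goodset S I m = {xs \<in> strings_of_length S m. \<forall>i\<in>I. i < m \<longrightarrow> xs ! i \<in> set (take i xs)}"

lemma goodset_finite: "finite S \<Longrightarrow> finite (goodset S I m)"
  unfolding goodset_def strings_of_length_def
  by (rule finite_subset[OF _ finite_lists_length_eq[of S m]]) auto

lemma goodset_step:
  "goodset S I (Suc m) \<subseteq> (\<lambda>(ys,c). ys @ [c]) ` Sigma (goodset S I m) (\<lambda>ys. {c\<in>S. m \<in> I \<longrightarrow> c \<in> set ys})"
proof
  fix xs assume xs: "xs \<in> goodset S I (Suc m)"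
  then have len: "length xs = Suc m" and setS: "set xs \<subseteq> S"
    and P: "\<And>i. i \<in> I \<Longrightarrow> i < Suc m \<Longrightarrow> xs ! i \<in> set (take i xs)"
    by (auto simp: goodset_def strings_of_length_def)
  obtain ys c where xsd: "xs = ys @ [c]"
    using len by (metis append_butlast_last_id length_0_conv nat.distinct(1))
  have ly: "length ys = m" using len xsd by simp
  have "ys \<in> goodset S I m"
    unfolding goodset_def strings_of_length_def
  proof (intro CollectI conjI ballI impI)
    show "set ys \<subseteq> S" using setS xsd by auto
    show "length ys = m" by fact
    fix i assume "i \<in> I" "i < m"
    then have "xs ! i \<in> set (take i xs)" using P by simp
    then show "ys ! i \<in> set (take i ys)" using \<open>i < m\<close> ly xsd by (simp add: nth_append)
  qed
  moreover have "c \<in> S" using setS xsd by auto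
  moreover have "m \<in> I \<longrightarrow> c \<in> set ys"
  proof
    assume "m \<in> I"
    then have "xs ! m \<in> set (take m xs)" using P by simp
    then show "c \<in> set ys" using ly xsd by (simp add: nth_append)
  qed
  ultimately show "xs \<in> (\<lambda>(ys,c). ys @ [c]) ` Sigma (goodset S I m) (\<lambda>ys. {c\<in>S. m \<in> I \<longrightarrow> c \<in> set ys})"
    using xsd by (auto intro!: image_eqI[where x="(ys,c)"])
qed

lemma goodset_card:
  assumes fin: "finite S" and pos: "card S > 0"
  shows "m \<le> Q \<Longrightarrow> real (card (goodset S I m)) \<le> real (card S) ^ m * (real Q / real (card S)) ^ card (I \<inter> {..<m})"
proof (induction m)
  case 0
  have "goodset S I 0 = {[]}" by (auto simp: goodset_def strings_of_length_def)
  then show ?case by simp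
next
  case (Suc m)
  define n where "n = card S"
  define b where "b = (if m \<in> I then m else n)"
  define B where "B = (\<lambda>ys. {c\<in>S. m \<in> I \<longrightarrow> c \<in> set ys})"
  have fB: "\<And>ys. finite (B ys)" using fin by (auto simp: B_def)
  have cB: "card (B ys) \<le> b" if "ys \<in> goodset S I m" for ys
  proof (cases "m \<in> I")
    case True
    have "B ys \<subseteq> set ys" using True by (auto simp: B_def)
    then have "card (B ys) \<le> card (set ys)" by (simp add: card_mono)
    also have "\<dots> \<le> length ys" by (rule card_length)
    finally show ?thesis using that True by (simp add: b_def goodset_def strings_of_length_def)
  next
    case False
    then show ?thesis using fin by (simp add: b_def B_def n_def card_mono)
  qed
  have "card (goodset S I (Suc m)) \<le> card ((\<lambda>(ys,c). ys @ [c]) ` Sigma (goodset S I m) B)"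
    using goodset_step[of S I m] fin goodset_finite[of S I] fB unfolding B_def
    by (intro card_mono) auto
  also have "\<dots> \<le> card (Sigma (goodset S I m) B)" by (rule card_image_le) (rule finite_SigmaI[OF goodset_finite[OF fin] fB])
  also have "\<dots> = (\<Sum>ys\<in>goodset S I m. card (B ys))"
    using goodset_finite[OF fin] fB by (simp add: card_SigmaI)
  also have "\<dots> \<le> card (goodset S I m) * b"
    using cB sum_bounded_above[of "goodset S I m" "\<lambda>ys. card (B ys)" b] by (simp add: mult.commute)
  finally have c1: "real (card (goodset S I (Suc m))) \<le> real (card (goodset S I m)) * real b"
    by (metis of_nat_le_iff of_nat_mult)
  define c where "c = card (I \<inter> {..<m})"
  have IH: "real (card (goodset S I m)) \<le> real n ^ m * (real Q / real n) ^ c"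
    using Suc by (simp add: n_def c_def)
  have npos: "real n > 0" using pos by (simp add: n_def)
  have fin2: "finite (I \<inter> {..<m})" by simp
  show ?case
  proof (cases "m \<in> I")
    case True
    have "I \<inter> {..<Suc m} = insert m (I \<inter> {..<m})" using True by auto
    then have cc: "card (I \<inter> {..<Suc m}) = Suc c" using fin2 by (simp add: c_def)
    have "real (card (goodset S I (Suc m))) \<le> real n ^ m * (real Q / real n) ^ c * real m"
      using c1 IH True by (simp add: b_def) (meson mult_right_mono of_nat_0_le_iff order_trans)
    also have "\<dots> \<le> real n ^ m * (real Q / real n) ^ c * real Q"
      using Suc.prems npos by (intro mult_left_mono) auto
    also have "\<dots> = real n ^ Suc m * (real Q / real n) ^ Suc c"
      using npos by (simp add: field_simps)
    finally show ?thesis using cc by (simp add: n_def)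
  next
    case False
    have "I \<inter> {..<Suc m} = I \<inter> {..<m}" using False by (auto simp: less_Suc_eq)
    then have cc: "card (I \<inter> {..<Suc m}) = c" by (simp add: c_def)
    have "real (card (goodset S I (Suc m))) \<le> real n ^ m * (real Q / real n) ^ c * real n"
      using c1 IH False by (simp add: b_def) (meson mult_right_mono of_nat_0_le_iff order_trans)
    also have "\<dots> = real n ^ Suc m * (real Q / real n) ^ c"
      by (simp add: field_simps)
    finally show ?thesis using cc by (simp add: n_def)
  qed
qed

lemma exp_fact: "k \<ge> 5 \<Longrightarrow> exp (real k - 1) \<le> fact k"
proof (induction k rule: dec_induct)
  case base
  have "exp (real 5 - 1) = exp 1 ^ 4" by (simp add: exp_of_nat_mult[symmetric])
  also have "\<dots> \<le> 3 ^ 4" using exp_le by (intro power_mono) auto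
  finally show ?case by (simp add: fact_numeral)
next
  case (step k)
  have "exp (real (Suc k) - 1) = exp 1 * exp (real k - 1)" by (simp add: exp_add[symmetric])
  also have "\<dots> \<le> 3 * fact k" using exp_le step.IH by (intro mult_mono) auto
  also have "\<dots> \<le> real (Suc k) * fact k" using step.hyps by (intro mult_right_mono) auto
  finally show ?case by simp
qed

theorem lemma2:
  fixes \<Sigma> :: "'a set" and n q :: nat and \<gamma> :: real
  assumes "finite \<Sigma>" and "card \<Sigma> = n" and "n \<ge> 9"
    and "real q \<le> sqrt (real n)"
    and "\<gamma> \<ge> 4"
  shows "measure_pmf.prob (pmf_of_set (strings_of_length \<Sigma> q))
           {xs. real (num_reappearing xs) \<ge> \<gamma> + 1} \<le> exp (- \<gamma>)"
proof -
  define S where "S = strings_of_length \<Sigma> q"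
  define k where "k = nat \<lceil>\<gamma>\<rceil> + 1"
  have k5: "k \<ge> 5" using assms(5) by (simp add: k_def) linarith
  have kg: "real k - 1 \<le> \<gamma> + 1 - 1 + 1" unfolding k_def using assms(5) by linarith
  have fS: "finite S" unfolding S_def strings_of_length_def using finite_lists_length_eq[OF assms(1)] .
  have cS: "card S = n ^ q" unfolding S_def strings_of_length_def
    using card_lists_length_eq[OF assms(1)] assms(2) by simp
  have neS: "S \<noteq> {}" using cS assms(3) by auto
  have npos: "real n > 0" using assms(3) by simp
  have qq: "real q * real q \<le> real n"
    proof -
    have "real q * real q \<le> sqrt (real n) * sqrt (real n)"
      using assms(4) by (intro mult_mono) auto
    then show ?thesis by simp
  qed
  define Is where "Is = {I. I \<subseteq> {..<q} \<and> card I = k}"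
  have fIs: "finite Is" unfolding Is_def by (rule finite_subset[of _ "Pow {..<q}"]) auto
  have cIs: "card Is = q choose k" unfolding Is_def using n_subsets[of "{..<q}" k] by simp
  have sub: "S \<inter> {xs. real (num_reappearing xs) \<ge> \<gamma> + 1} \<subseteq> (\<Union>I\<in>Is. goodset \<Sigma> I q)"
  proof
    fix xs assume xs: "xs \<in> S \<inter> {xs. real (num_reappearing xs) \<ge> \<gamma> + 1}"
    then have len: "length xs = q" and st: "set xs \<subseteq> \<Sigma>" by (auto simp: S_def strings_of_length_def)
    have "real (num_reappearing xs) \<ge> \<gamma> + 1" using xs by auto
    then have "\<gamma> \<le> real_of_int (int (num_reappearing xs) - 1)" by simp
    then have "\<lceil>\<gamma>\<rceil> \<le> int (num_reappearing xs) - 1" by (rule ceiling_le)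
    moreover have "\<lceil>\<gamma>\<rceil> \<ge> 0" using assms(5) by simp
    ultimately have "int (nat \<lceil>\<gamma>\<rceil>) < int (num_reappearing xs)" by simp
    then have "num_reappearing xs \<ge> k" unfolding k_def by linarith
    then obtain T where T: "T \<subseteq> reappearing_positions xs" "card T = k"
      unfolding num_reappearing_def by (meson obtain_subset_with_card_n)
    have "T \<in> Is" using T len by (auto simp: Is_def reappearing_positions_def)
    moreover have "xs \<in> goodset \<Sigma> T q"
      using T len st by (auto simp: goodset_def strings_of_length_def reappearing_positions_def)
    ultimately show "xs \<in> (\<Union>I\<in>Is. goodset \<Sigma> I q)" by blast
  qed
  have "card (S \<inter> {xs. real (num_reappearing xs) \<ge> \<gamma> + 1}) \<le> card (\<Union>I\<in>Is. goodset \<Sigma> I q)"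
    using sub fIs goodset_finite[OF assms(1)] by (intro card_mono) auto
  also have "\<dots> \<le> (\<Sum>I\<in>Is. card (goodset \<Sigma> I q))" by (rule card_UN_le[OF fIs])
  finally have c1: "real (card (S \<inter> {xs. real (num_reappearing xs) \<ge> \<gamma> + 1})) \<le> (\<Sum>I\<in>Is. real (card (goodset \<Sigma> I q)))"
    by (metis of_nat_le_iff of_nat_sum)
  have "\<And>I. I \<in> Is \<Longrightarrow> real (card (goodset \<Sigma> I q)) \<le> real n ^ q * (real q / real n) ^ k"
  proof -
    fix I assume "I \<in> Is"
    then have "I \<inter> {..<q} = I" "card I = k" by (auto simp: Is_def)
    then show "real (card (goodset \<Sigma> I q)) \<le> real n ^ q * (real q / real n) ^ k"
      using goodset_card[OF assms(1), of q q I] assms(2,3) by simp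
  qed
  then have "(\<Sum>I\<in>Is. real (card (goodset \<Sigma> I q))) \<le> real (q choose k) * (real n ^ q * (real q / real n) ^ k)"
    using sum_bounded_above[of Is "\<lambda>I. real (card (goodset \<Sigma> I q))"] cIs by simp
  then have c2: "real (card (S \<inter> {xs. real (num_reappearing xs) \<ge> \<gamma> + 1})) / real (card S)
      \<le> real (q choose k) * (real q / real n) ^ k"
  proof -
    assume h: "(\<Sum>I\<in>Is. real (card (goodset \<Sigma> I q))) \<le> real (q choose k) * (real n ^ q * (real q / real n) ^ k)"
    have "real (card (S \<inter> {xs. real (num_reappearing xs) \<ge> \<gamma> + 1})) \<le> real (q choose k) * (real n ^ q * (real q / real n) ^ k)"
      using c1 h by linarith
    then have "real (card (S \<inter> {xs. real (num_reappearing xs) \<ge> \<gamma> + 1})) / real n ^ q \<le> real (q choose k) * (real n ^ q * (real q / real n) ^ k) / real n ^ q"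
      using npos by (intro divide_right_mono) auto
    then show ?thesis using cS npos by simp
  qed
  have bf: "real (q choose k) * fact k \<le> real q ^ k"
    using binomial_fact_pow[of q k] by (metis of_nat_fact of_nat_le_iff of_nat_mult of_nat_power)
  have "real (q choose k) * (real q / real n) ^ k * fact k \<le> real q ^ k * (real q / real n) ^ k"
  proof -
    have "real (q choose k) * fact k * (real q / real n) ^ k \<le> real q ^ k * (real q / real n) ^ k"
      using bf by (intro mult_right_mono) auto
    then show ?thesis by (simp add: ac_simps)
  qed
  also have "\<dots> = (real q * real q / real n) ^ k" by (simp add: power_mult_distrib[symmetric])
  also have "\<dots> \<le> 1" using qq npos by (intro power_le_one) auto
  finally have c3: "real (q choose k) * (real q / real n) ^ k \<le> 1 / fact k"
    by (simp add: divide_simps)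
  have "1 / fact k \<le> exp (- (real k - 1))"
  proof -
    have "1 / fact k \<le> 1 / exp (real k - 1)"
      using exp_fact[OF k5] by (intro divide_left_mono) auto
    then show ?thesis by (metis exp_minus inverse_eq_divide)
  qed
  also have "\<dots> \<le> exp (- \<gamma>)" using kg unfolding k_def using assms(5) by simp
  finally have c4: "1 / fact k \<le> exp (- \<gamma>)" .
  have "measure_pmf.prob (pmf_of_set S) {xs. real (num_reappearing xs) \<ge> \<gamma> + 1}
     = real (card (S \<inter> {xs. real (num_reappearing xs) \<ge> \<gamma> + 1})) / real (card S)"
    using measure_pmf_of_set[OF neS fS] by simp
  with c2 c3 c4 show ?thesis unfolding S_def by linarith
qed

end
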